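(* Let $\mathbb Y^{(\mathcal K)}$ be the stationary Markov chain on $I^2\times\{0,1\}$ with transition matrix $\mathcal K$ and stationary law $\zeta$, and $\mathbb Y^{(\mathcal A)}$ the stationary Markov chain on $I^2\times\mathcal E^*$ with transition matrix $\mathcal A$ and stationary law $\eta$. Then $$h(\mathbb Y^{(\mathcal A)})=h(\mathbb Y^{(\mathcal K)})+\sum_{i\in I}\mu(i)P(i,\mathcal E)H(D^i),\qquad H(D^i)=-\sum_{\delta\in\mathcal E}\frac{P(i,\delta)}{P(i,\mathcal E)}\log\frac{P(i,\delta)}{P(i,\mathcal E)},$$ and $$h(\mathbb Y^{(\mathcal A)})=-(1-\gamma)\sum_{j\in I}\mu(j)\log\mu(j)-\sum_{i,j\in I}\mu(i)P(i,j)\log P(i,j)-\sum_{i\in I,\delta\in\mathcal E}\mu(i)P(i,\delta)\log P(i,\delta).$$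
   Context: $I$ and $\mathcal E$ are disjoint countable sets, $\mathcal E\ne\emptyset$; $P$ is a stochastic matrix on $I\cup\mathcal E$ with all $\epsilon\in\mathcal E$ absorbing, irreducible restriction $P_I$ to $I$, $\sum_{i\in I}P(i,\mathcal E)>0$ where $P(i,\mathcal E)=\sum_{\epsilon\in\mathcal E}P(i,\epsilon)$, and $\mathcal E$ reached a.s. from every $i\in I$. $\mu$ is a quasi-stationary distribution of $P_I$: a probability on $I$ with $\mu^tP_I=\gamma\mu^t$, $\gamma=\sum_{i,j\in I}\mu(i)P(i,j)\in(0,1)$. Terms with $P(i,\mathcal E)=0$ contribute $0$. The matrix $\mathcal K$ on $I^2\times\{0,1\}$: $\mathcal K((i,j,a),(l,k,b))=0$ if $l\ne j$, and $\mathcal K((i,j,a),(j,k,b))=P(j,k)\mathbf 1(b=1)+P(j,\mathcal E)\mu(k)\mathbf 1(b=0)$; stationary law $\zeta(i,j,a)=\mu(i)P(i,j)\mathbf 1(a=1)+\mu(i)P(i,\mathcal E)\mu(j)\mathbf 1(a=0)$. Let $\mathcal E^*=\mathcal E\cup\{o\}$ with $o\notin I\cup\mathcal E$. The matrix $\mathcal A$ on $I^2\times\mathcal E^*$: $\mathcal A((i,j,\delta),(l,k,\epsilon))=0$ if $l\neq j$, $=P(j,k)$ if $l=j,\epsilon=o$, and $=P(j,\epsilon)\mu(k)$ if $l=j,\epsilon\in\mathcal E$; stationary law $\eta(i,j,\delta)=\mu(i)P(i,j)\mathbf 1(\delta=o)+\mu(i)P(i,\delta)\mu(j)\mathbf 1(\delta\in\mathcal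 E)$. For a stationary Markov chain $\mathbb Z$ with transition matrix $R$ and stationary law $\nu$, $h(\mathbb Z)=-\sum_a\nu(a)\sum_bR(a,b)\log R(a,b)$ (with $0\log 0=0$). *)

theory Defs
  imports "HOL-Analysis.Analysis"
begin

definition PE :: "('s \<Rightarrow> 's \<Rightarrow> real) \<Rightarrow> 's set \<Rightarrow> 's \<Rightarrow> real" where
  "PE P E i = (\<Sum>\<^sub>\<infinity>e\<in>E. P i e)"

fun mpow :: "('s \<Rightarrow> 's \<Rightarrow> real) \<Rightarrow> 's set \<Rightarrow> nat \<Rightarrow> 's \<Rightarrow> 's \<Rightarrow> real" where
  "mpow P S 0 x y = (if x = y then 1 else 0)"
| "mpow P S (Suc n) x y = (\<Sum>\<^sub>\<infinity>z\<in>S. mpow P S n x z * P z y)"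

text \<open>Entropy rate h of a stationary chain with transition matrix R and stationary law nu
  on state set S: h = - sum_a nu(a) sum_b R(a,b) log R(a,b), with 0 log 0 = 0
  (Isabelle: ln 0 = 0). All terms are nonnegative, so h is taken in [0,\<infinity>].\<close>
definition entropy_rate :: "'x set \<Rightarrow> ('x \<Rightarrow> 'x \<Rightarrow> real) \<Rightarrow> ('x \<Rightarrow> real) \<Rightarrow> ennreal" where
  "entropy_rate S R \<nu> =
     (\<Sum>\<^sub>\<infinity>a\<in>S. ennreal (\<nu> a) * (\<Sum>\<^sub>\<infinity>b\<in>S. ennreal (- (R a b * ln (R a b)))))"

definition Kmat :: "('s \<Rightarrow> 's \<Rightarrow> real) \<Rightarrow> 's set \<Rightarrow> ('s \<Rightarrow> real)
    \<Rightarrow> ('s \<times> 's \<times> nat) \<Rightarrow> ('s \<times> 's \<times> nat) \<Rightarrow> real" where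
  "Kmat P E \<mu> x y = (case x of (i, j, a) \<Rightarrow> case y of (l, k, b) \<Rightarrow>
     if l \<noteq> j then 0
     else (if b = 1 then P j k else 0) + (if b = 0 then PE P E j * \<mu> k else 0))"

definition zeta :: "('s \<Rightarrow> 's \<Rightarrow> real) \<Rightarrow> 's set \<Rightarrow> ('s \<Rightarrow> real) \<Rightarrow> ('s \<times> 's \<times> nat) \<Rightarrow> real" where
  "zeta P E \<mu> x = (case x of (i, j, a) \<Rightarrow>
     (if a = 1 then \<mu> i * P i j else 0) + (if a = 0 then \<mu> i * PE P E i * \<mu> j else 0))"

text \<open>E* = E plus a fresh point o; modelled as 's option with None = o, Some e = e.\<close>
definition Estar :: "'s set \<Rightarrow> 's option set" where
  "Estar E = insert None (Some ` E)"

definition Amat :: "('s \<Rightarrow> 's \<Rightarrow> real) \<Rightarrow> ('s \<Rightarrow> real)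
    \<Rightarrow> ('s \<times> 's \<times> 's option) \<Rightarrow> ('s \<times> 's \<times> 's option) \<Rightarrow> real" where
  "Amat P \<mu> x y = (case x of (i, j, d) \<Rightarrow> case y of (l, k, e) \<Rightarrow>
     if l \<noteq> j then 0
     else (case e of None \<Rightarrow> P j k | Some \<epsilon> \<Rightarrow> P j \<epsilon> * \<mu> k))"

definition eta :: "('s \<Rightarrow> 's \<Rightarrow> real) \<Rightarrow> ('s \<Rightarrow> real) \<Rightarrow> ('s \<times> 's \<times> 's option) \<Rightarrow> real" where
  "eta P \<mu> x = (case x of (i, j, d) \<Rightarrow>
     (case d of None \<Rightarrow> \<mu> i * P i j | Some \<delta> \<Rightarrow> \<mu> i * P i \<delta> * \<mu> j))"

definition HD :: "('s \<Rightarrow> 's \<Rightarrow> real) \<Rightarrow> 's set \<Rightarrow> 's \<Rightarrow> ennreal" where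
  "HD P E i = (\<Sum>\<^sub>\<infinity>\<delta>\<in>E. ennreal (- ((P i \<delta> / PE P E i) * ln (P i \<delta> / PE P E i))))"

end

theory Submission
  imports Defs
begin

lemma ens_summ[simp]: "(f::'a \<Rightarrow> ennreal) summable_on S"
  by (simp add: nonneg_summable_on_complete)

lemma ens_mono_sub:
  fixes f :: "'a \<Rightarrow> ennreal"
  shows "A \<subseteq> B \<Longrightarrow> infsum f A \<le> infsum f B"
  by (rule infsum_mono_neutral) auto

lemma ens_Sigma_fin:
  fixes f :: "'a \<times> 'b \<Rightarrow> ennreal"
  assumes "finite G"
  shows "infsum f (Sigma G B) = (\<Sum>x\<in>G. \<Sum>\<^sub>\<infinity>y\<in>B x. f (x, y))"
  using assms
proof (induction G rule: finite_induct)
  case empty thus ?case by simp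
next
  case (insert x G)
  have e: "Sigma (insert x G) B = (Pair x ` B x) \<union> Sigma G B" by auto
  have "infsum f (Sigma (insert x G) B) = infsum f (Pair x ` B x) + infsum f (Sigma G B)"
    unfolding e by (rule infsum_Un_disjoint) (use insert in auto)
  also have "infsum f (Pair x ` B x) = (\<Sum>\<^sub>\<infinity>y\<in>B x. f (x, y))"
    by (subst infsum_reindex) (auto simp: o_def inj_on_def)
  finally show ?case using insert by simp
qed

lemma ens_SUP:
  fixes g :: "'a \<Rightarrow> ennreal"
  shows "infsum g A = (SUP G\<in>{G. finite G \<and> G \<subseteq> A}. sum g G)"
  by (rule nonneg_infsum_complete[of A g]) (rule zero_le)

lemma ens_Sigma:
  fixes f :: "'a \<times> 'b \<Rightarrow> ennreal"
  shows "infsum f (Sigma A B) = (\<Sum>\<^sub>\<infinity>x\<in>A. \<Sum>\<^sub>\<infinity>y\<in>B x. f (x, y))"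
proof (rule antisym)
  define g where "g x = (\<Sum>\<^sub>\<infinity>y\<in>B x. f (x, y))" for x
  have "infsum f (Sigma A B) \<le> infsum g A"
    unfolding ens_SUP[of f]
  proof (rule SUP_least)
    fix F assume "F \<in> {G. finite G \<and> G \<subseteq> Sigma A B}"
    hence F: "finite F" "F \<subseteq> Sigma A B" by auto
    have sub: "F \<subseteq> Sigma (fst ` F) B" using F(2) by force
    have sub2: "fst ` F \<subseteq> A" using F(2) by force
    have "sum f F = infsum f F" by (rule infsum_finite[symmetric, OF F(1)])
    also have "\<dots> \<le> infsum f (Sigma (fst ` F) B)" using sub by (rule ens_mono_sub)
    also have "\<dots> = sum g (fst ` F)" unfolding g_def using F(1) by (intro ens_Sigma_fin) simp
    also have "\<dots> = infsum g (fst ` F)" using F(1) by (intro infsum_finite[symmetric]) simp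
    also have "\<dots> \<le> infsum g A" using sub2 by (rule ens_mono_sub)
    finally show "sum f F \<le> infsum g A" .
  qed
  thus "infsum f (Sigma A B) \<le> (\<Sum>\<^sub>\<infinity>x\<in>A. \<Sum>\<^sub>\<infinity>y\<in>B x. f (x, y))" unfolding g_def .
  have "infsum g A \<le> infsum f (Sigma A B)"
    unfolding ens_SUP[of g]
  proof (rule SUP_least)
    fix G assume "G \<in> {G. finite G \<and> G \<subseteq> A}"
    hence G: "finite G" "G \<subseteq> A" by auto
    have "sum g G = infsum f (Sigma G B)" unfolding g_def by (rule ens_Sigma_fin[symmetric, OF G(1)])
    also have "\<dots> \<le> infsum f (Sigma A B)" using G(2) by (intro ens_mono_sub) auto
    finally show "sum g G \<le> infsum f (Sigma A B)" .
  qed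
  thus "(\<Sum>\<^sub>\<infinity>x\<in>A. \<Sum>\<^sub>\<infinity>y\<in>B x. f (x, y)) \<le> infsum f (Sigma A B)" unfolding g_def .
qed

lemma ens_prod:
  fixes g :: "'a \<Rightarrow> 'b \<Rightarrow> ennreal"
  shows "(\<Sum>\<^sub>\<infinity>(x,y)\<in>A \<times> B. g x y) = (\<Sum>\<^sub>\<infinity>x\<in>A. \<Sum>\<^sub>\<infinity>y\<in>B. g x y)"
  using ens_Sigma[of "\<lambda>(x,y). g x y" A "\<lambda>_. B"] by simp

lemma ens_swap:
  fixes g :: "'a \<Rightarrow> 'b \<Rightarrow> ennreal"
  shows "(\<Sum>\<^sub>\<infinity>x\<in>A. \<Sum>\<^sub>\<infinity>y\<in>B. g x y) = (\<Sum>\<^sub>\<infinity>y\<in>B. \<Sum>\<^sub>\<infinity>x\<in>A. g x y)"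
proof -
  have "(\<Sum>\<^sub>\<infinity>(x,y)\<in>A \<times> B. g x y) = ((\<Sum>\<^sub>\<infinity>(y,x)\<in>B \<times> A. g x y) :: ennreal)"
  proof -
    have "(\<Sum>\<^sub>\<infinity>(x,y)\<in>A \<times> B. g x y) = infsum (\<lambda>(x,y). g x y) (prod.swap ` (B \<times> A))"
      by (simp only: product_swap)
    also have "\<dots> = infsum ((\<lambda>(x,y). g x y) \<circ> prod.swap) (B \<times> A)"
      by (rule infsum_reindex) simp
    finally show ?thesis by (simp add: o_def case_prod_unfold)
  qed
  thus ?thesis using ens_prod[of g A B] ens_prod[of "\<lambda>y x. g x y" B A] by simp
qed

lemma ens_cmult_left:
  fixes f :: "'a \<Rightarrow> ennreal"
  shows "(\<Sum>\<^sub>\<infinity>x\<in>A. c * f x) = c * (\<Sum>\<^sub>\<infinity>x\<in>A. f x)"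
  by (simp add: nonneg_infsum_complete SUP_mult_left_ennreal sum_distrib_left)

lemma ens_cmult_right:
  fixes f :: "'a \<Rightarrow> ennreal"
  shows "(\<Sum>\<^sub>\<infinity>x\<in>A. f x * c) = (\<Sum>\<^sub>\<infinity>x\<in>A. f x) * c"
  using ens_cmult_left[of c f A] by (simp add: mult.commute)

lemma ens_add:
  fixes f g :: "'a \<Rightarrow> ennreal"
  shows "(\<Sum>\<^sub>\<infinity>x\<in>A. f x + g x) = (\<Sum>\<^sub>\<infinity>x\<in>A. f x) + (\<Sum>\<^sub>\<infinity>x\<in>A. g x)"
  by (rule infsum_add) (simp_all add: ens_summ)

lemma ens_single:
  fixes g :: "'a \<Rightarrow> ennreal"
  assumes "j \<in> A" "\<And>x. x \<in> A \<Longrightarrow> x \<noteq> j \<Longrightarrow> g x = 0"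
  shows "infsum g A = g j"
proof -
  have "infsum g A = infsum g {j}"
    by (rule infsum_cong_neutral) (use assms in auto)
  thus ?thesis by simp
qed

lemma ens_real:
  fixes f :: "'a \<Rightarrow> real"
  assumes "(f has_sum s) A" "\<And>x. x \<in> A \<Longrightarrow> f x \<ge> 0"
  shows "(\<Sum>\<^sub>\<infinity>x\<in>A. ennreal (f x)) = ennreal s"
proof -
  have "((ennreal \<circ> f) has_sum ennreal s) A"
  proof (rule has_sum_comm_additive_general[OF _ _ assms(1)])
    fix F assume F: "finite F" "F \<subseteq> A"
    show "sum (ennreal \<circ> f) F = ennreal (sum f F)"
      unfolding o_def by (rule sum_ennreal) (use F assms(2) in auto)
  next
    show "ennreal \<midarrow>s\<rightarrow> ennreal s" by (intro tendsto_ennrealI tendsto_ident_at)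
  qed
  thus ?thesis by (simp add: infsumI o_def)
qed

lemma ens_Estar:
  fixes g :: "'a option \<Rightarrow> ennreal"
  shows "infsum g (Estar E) = g None + (\<Sum>\<^sub>\<infinity>e\<in>E. g (Some e))"
proof -
  have "infsum g (Estar E) = g None + infsum g (Some ` E)"
    unfolding Estar_def by (rule infsum_insert) (auto simp: ens_summ)
  also have "infsum g (Some ` E) = (\<Sum>\<^sub>\<infinity>e\<in>E. g (Some e))"
    by (subst infsum_reindex) (auto simp: o_def)
  
  finally show ?thesis .
qed

definition fe :: "real \<Rightarrow> ennreal" where "fe x = ennreal (- (x * ln x))"

lemma fe_mult:
  assumes "0 \<le> x" "x \<le> 1" "0 \<le> y" "y \<le> 1"
  shows "fe (x * y) = ennreal y * fe x + ennreal x * fe y"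
proof (cases "x = 0 \<or> y = 0")
  case True thus ?thesis by (auto simp: fe_def)
next
  case False
  hence p: "x > 0" "y > 0" using assms by auto
  have a: "- (x * ln x) \<ge> 0" using p assms by (simp add: mult_nonneg_nonpos)
  have b: "- (y * ln y) \<ge> 0" using p assms by (simp add: mult_nonneg_nonpos)
  have eq: "- (x * y * ln (x * y)) = y * (- (x * ln x)) + x * (- (y * ln y))"
    using p by (simp add: ln_mult algebra_simps)
  have "fe (x * y) = ennreal (y * (- (x * ln x)) + x * (- (y * ln y)))"
    unfolding fe_def eq by (rule refl)
  also have "\<dots> = ennreal (y * (- (x * ln x))) + ennreal (x * (- (y * ln y)))"
    using a b p by (intro ennreal_plus) (auto simp: mult_nonneg_nonpos mult_pos_neg)
  also have "ennreal (y * (- (x * ln x))) = ennreal y * fe x"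
    unfolding fe_def using a p by (intro ennreal_mult) auto
  also have "ennreal (x * (- (y * ln y))) = ennreal x * fe y"
    unfolding fe_def using b p by (intro ennreal_mult) auto
  finally show ?thesis .
qed


lemma hs_sub_le:
  fixes f :: "'a \<Rightarrow> real"
  assumes "(f has_sum s) A" "(f has_sum t) B" "B \<subseteq> A" "\<And>x. x \<in> A \<Longrightarrow> 0 \<le> f x"
  shows "t \<le> s"
  using has_sum_mono_neutral[OF assms(2) assms(1)] assms(3,4) by auto

lemma hs_single_le:
  fixes f :: "'a \<Rightarrow> real"
  assumes "(f has_sum s) A" "y \<in> A" "\<And>x. x \<in> A \<Longrightarrow> 0 \<le> f x"
  shows "f y \<le> s"
proof -
  have "(f has_sum f y) {y}" using has_sum_finite[of "{y}" f] by simp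
  thus ?thesis by (rule hs_sub_le[OF assms(1)]) (use assms in auto)
qed

lemma fe_zero[simp]: "fe 0 = 0" by (simp add: fe_def)

theorem proposition4:
  fixes I E :: "'s set" and P :: "'s \<Rightarrow> 's \<Rightarrow> real" and \<mu> :: "'s \<Rightarrow> real" and \<gamma> :: real
  assumes countI: "countable I" and countE: "countable E"
    and disj: "I \<inter> E = {}" and Ene: "E \<noteq> {}"
    and Pnn: "\<And>x y. x \<in> I \<union> E \<Longrightarrow> y \<in> I \<union> E \<Longrightarrow> P x y \<ge> 0"
    and Prow: "\<And>x. x \<in> I \<union> E \<Longrightarrow> ((\<lambda>y. P x y) has_sum 1) (I \<union> E)"
    and absorb: "\<And>\<epsilon>. \<epsilon> \<in> E \<Longrightarrow> P \<epsilon> \<epsilon> = 1"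
    and irred: "\<And>i j. i \<in> I \<Longrightarrow> j \<in> I \<Longrightarrow>
                  (i, j) \<in> {(x, y). x \<in> I \<and> y \<in> I \<and> P x y > 0}\<^sup>*"
    and exit_pos: "(\<Sum>\<^sub>\<infinity>i\<in>I. ennreal (PE P E i)) > 0"
    and absorbed: "\<And>i. i \<in> I \<Longrightarrow>
                  (\<lambda>n. \<Sum>\<^sub>\<infinity>\<epsilon>\<in>E. mpow P (I \<union> E) n i \<epsilon>) \<longlonglongrightarrow> 1"
    and \<mu>nn: "\<And>i. i \<in> I \<Longrightarrow> \<mu> i \<ge> 0"
    and \<mu>prob: "(\<mu> has_sum 1) I"
    and \<gamma>_def: "\<gamma> = (\<Sum>\<^sub>\<infinity>(i, j)\<in>I \<times> I. \<mu> i * P i j)"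
    and qsd: "\<And>j. j \<in> I \<Longrightarrow> ((\<lambda>i. \<mu> i * P i j) has_sum \<gamma> * \<mu> j) I"
    and \<gamma>_pos: "0 < \<gamma>" and \<gamma>_lt1: "\<gamma> < 1"
  shows "(entropy_rate (I \<times> I \<times> Estar E) (Amat P \<mu>) (eta P \<mu>)
           = entropy_rate (I \<times> I \<times> {0, 1}) (Kmat P E \<mu>) (zeta P E \<mu>)
             + (\<Sum>\<^sub>\<infinity>i\<in>I. ennreal (\<mu> i * PE P E i) * HD P E i))
         \<and> (entropy_rate (I \<times> I \<times> Estar E) (Amat P \<mu>) (eta P \<mu>)
           = ennreal (1 - \<gamma>) * (\<Sum>\<^sub>\<infinity>j\<in>I. ennreal (- (\<mu> j * ln (\<mu> j))))
             + (\<Sum>\<^sub>\<infinity>(i, j)\<in>I \<times> I. ennreal (- (\<mu> i * P i j * ln (P i j))))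
             + (\<Sum>\<^sub>\<infinity>(i, \<delta>)\<in>I \<times> E. ennreal (- (\<mu> i * P i \<delta> * ln (P i \<delta>)))))"
proof -
  have Pn: "\<And>x y. x \<in> I \<Longrightarrow> y \<in> I \<union> E \<Longrightarrow> 0 \<le> P x y" using Pnn by auto
  have Pr: "\<And>x. x \<in> I \<Longrightarrow> ((\<lambda>y. P x y) has_sum 1) (I \<union> E)" using Prow by auto
  have Ple1: "P x y \<le> 1" if "x \<in> I" "y \<in> I \<union> E" for x y
    by (rule hs_single_le[OF Pr[OF that(1)] that(2)]) (use Pn that in auto)
  have summ: "(\<lambda>y. P x y) summable_on (I \<union> E)" if "x \<in> I" for x
    using Pr[OF that] summable_on_def by blast
  have PEhs: "((\<lambda>e. P j e) has_sum PE P E j) E" if "j \<in> I" for j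
    unfolding PE_def by (rule has_sum_infsum, rule summable_on_subset_banach[OF summ[OF that]]) auto
  have PIhs: "((\<lambda>k. P j k) has_sum (1 - PE P E j)) I" if "j \<in> I" for j
  proof -
    have sI: "(\<lambda>k. P j k) summable_on I" by (rule summable_on_subset_banach[OF summ[OF that]]) auto
    have sE: "(\<lambda>k. P j k) summable_on E" by (rule summable_on_subset_banach[OF summ[OF that]]) auto
    have "infsum (\<lambda>k. P j k) (I \<union> E) = infsum (\<lambda>k. P j k) I + infsum (\<lambda>k. P j k) E"
      by (rule infsum_Un_disjoint[OF sI sE disj])
    moreover have "infsum (\<lambda>k. P j k) (I \<union> E) = 1" using Pr[OF that] by (rule infsumI)
    ultimately have "infsum (\<lambda>k. P j k) I = 1 - PE P E j" unfolding PE_def by simp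
    thus ?thesis using sI has_sum_infsum by fastforce
  qed
  have PEnn: "0 \<le> PE P E j" if "j \<in> I" for j
    by (rule has_sum_nonneg[OF PEhs[OF that]]) (use Pn that in auto)
  have PEle1: "PE P E j \<le> 1" if "j \<in> I" for j
    by (rule hs_sub_le[OF Pr[OF that] PEhs[OF that]]) (use Pn that in auto)
  have PlePE: "P j e \<le> PE P E j" if "j \<in> I" "e \<in> E" for j e
    by (rule hs_single_le[OF PEhs[OF that(1)] that(2)]) (use Pn that in auto)
  have \<mu>le1: "\<mu> k \<le> 1" if "k \<in> I" for k
    by (rule hs_single_le[OF \<mu>prob that]) (use \<mu>nn in auto)

  have S1: "(\<Sum>\<^sub>\<infinity>k\<in>I. ennreal (\<mu> k)) = 1"
    using ens_real[OF \<mu>prob \<mu>nn] by simp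
  have S2: "(\<Sum>\<^sub>\<infinity>e\<in>E. ennreal (P j e)) = ennreal (PE P E j)" if "j \<in> I" for j
    by (rule ens_real[OF PEhs[OF that]]) (use Pn that in auto)
  have S2': "(\<Sum>\<^sub>\<infinity>k\<in>I. ennreal (P j k)) = ennreal (1 - PE P E j)" if "j \<in> I" for j
    by (rule ens_real[OF PIhs[OF that]]) (use Pn that in auto)
  have S3: "(\<Sum>\<^sub>\<infinity>i\<in>I. ennreal (\<mu> i * P i j)) = ennreal (\<gamma> * \<mu> j)" if "j \<in> I" for j
    by (rule ens_real[OF qsd[OF that]]) (use Pn \<mu>nn that in auto)

  have S4: "(\<Sum>\<^sub>\<infinity>i\<in>I. ennreal (\<mu> i * PE P E i)) = ennreal (1 - \<gamma>)"
  proof -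
    define X where "X = (\<Sum>\<^sub>\<infinity>i\<in>I. ennreal (\<mu> i * PE P E i))"
    have "(\<Sum>\<^sub>\<infinity>i\<in>I. ennreal (\<mu> i) * ennreal (1 - PE P E i))
        = (\<Sum>\<^sub>\<infinity>i\<in>I. \<Sum>\<^sub>\<infinity>k\<in>I. ennreal (\<mu> i * P i k))"
    proof (rule infsum_cong)
      fix i assume i: "i \<in> I"
      have "ennreal (\<mu> i) * ennreal (1 - PE P E i) = (\<Sum>\<^sub>\<infinity>k\<in>I. ennreal (\<mu> i) * ennreal (P i k))"
        by (simp add: ens_cmult_left S2'[OF i])
      also have "\<dots> = (\<Sum>\<^sub>\<infinity>k\<in>I. ennreal (\<mu> i * P i k))"
        by (rule infsum_cong) (simp add: ennreal_mult' \<mu>nn i)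
      finally show "ennreal (\<mu> i) * ennreal (1 - PE P E i) = (\<Sum>\<^sub>\<infinity>k\<in>I. ennreal (\<mu> i * P i k))" .
    qed
    also have "\<dots> = (\<Sum>\<^sub>\<infinity>k\<in>I. \<Sum>\<^sub>\<infinity>i\<in>I. ennreal (\<mu> i * P i k))" by (rule ens_swap)
    also have "\<dots> = (\<Sum>\<^sub>\<infinity>k\<in>I. ennreal \<gamma> * ennreal (\<mu> k))"
      by (rule infsum_cong) (simp add: S3 ennreal_mult' \<gamma>_pos[THEN less_imp_le])
    also have "\<dots> = ennreal \<gamma>" by (simp add: ens_cmult_left S1)
    finally have A: "(\<Sum>\<^sub>\<infinity>i\<in>I. ennreal (\<mu> i) * ennreal (1 - PE P E i)) = ennreal \<gamma>" .
    have "(\<Sum>\<^sub>\<infinity>i\<in>I. ennreal (\<mu> i) * ennreal (1 - PE P E i)) + X = (\<Sum>\<^sub>\<infinity>i\<in>I. ennreal (\<mu> i))"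
      unfolding X_def ens_add[symmetric]
    proof (rule infsum_cong)
      fix i assume i: "i \<in> I"
      have "ennreal (\<mu> i) * ennreal (1 - PE P E i) + ennreal (\<mu> i * PE P E i)
          = ennreal (\<mu> i * (1 - PE P E i)) + ennreal (\<mu> i * PE P E i)"
        by (simp add: ennreal_mult' \<mu>nn i)
      also have "\<dots> = ennreal (\<mu> i * (1 - PE P E i) + \<mu> i * PE P E i)"
        using \<mu>nn[OF i] PEnn[OF i] PEle1[OF i] by (intro ennreal_plus[symmetric]) auto
      also have "\<mu> i * (1 - PE P E i) + \<mu> i * PE P E i = \<mu> i" by (simp add: algebra_simps)
      finally show "ennreal (\<mu> i) * ennreal (1 - PE P E i) + ennreal (\<mu> i * PE P E i) = ennreal (\<mu> i)" .
    qed
    hence "ennreal \<gamma> + X = 1" using A S1 by simp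
    hence h: "ennreal \<gamma> + X = 1" .
    have "X = (ennreal \<gamma> + X) - ennreal \<gamma>" by simp
    hence "X = 1 - ennreal \<gamma>" unfolding h .
    also have "\<dots> = ennreal (1 - \<gamma>)" using \<gamma>_pos ennreal_minus[of \<gamma> 1] by simp
    finally show ?thesis unfolding X_def .
  qed

  have WA: "(\<Sum>\<^sub>\<infinity>i\<in>I. \<Sum>\<^sub>\<infinity>d\<in>Estar E. ennreal (eta P \<mu> (i, j, d))) = ennreal (\<mu> j)" if j: "j \<in> I" for j
  proof -
    have "(\<Sum>\<^sub>\<infinity>i\<in>I. \<Sum>\<^sub>\<infinity>d\<in>Estar E. ennreal (eta P \<mu> (i, j, d)))
        = (\<Sum>\<^sub>\<infinity>i\<in>I. ennreal (\<mu> i * P i j) + ennreal (\<mu> i * PE P E i) * ennreal (\<mu> j))"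
    proof (rule infsum_cong)
      fix i assume i: "i \<in> I"
      have "(\<Sum>\<^sub>\<infinity>e\<in>E. ennreal (\<mu> i * P i e * \<mu> j)) = (\<Sum>\<^sub>\<infinity>e\<in>E. ennreal (\<mu> i * \<mu> j) * ennreal (P i e))"
      proof (rule infsum_cong)
        fix e assume "e \<in> E"
        have "\<mu> i * P i e * \<mu> j = (\<mu> i * \<mu> j) * P i e" by (simp add: mult_ac)
        moreover have "ennreal ((\<mu> i * \<mu> j) * P i e) = ennreal (\<mu> i * \<mu> j) * ennreal (P i e)"
          by (rule ennreal_mult') (simp add: \<mu>nn i j)
        ultimately show "ennreal (\<mu> i * P i e * \<mu> j) = ennreal (\<mu> i * \<mu> j) * ennreal (P i e)" by metis
      qed
      also have "\<dots> = ennreal (\<mu> i * \<mu> j) * ennreal (PE P E i)" by (simp add: ens_cmult_left S2 i)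
      also have "\<dots> = ennreal (\<mu> i * PE P E i) * ennreal (\<mu> j)"
        by (simp add: ennreal_mult'[symmetric] \<mu>nn i j PEnn mult_nonneg_nonneg mult_ac)
      finally show "(\<Sum>\<^sub>\<infinity>d\<in>Estar E. ennreal (eta P \<mu> (i, j, d))) = ennreal (\<mu> i * P i j) + ennreal (\<mu> i * PE P E i) * ennreal (\<mu> j)"
        by (simp add: ens_Estar eta_def)
    qed
    also have "\<dots> = ennreal (\<gamma> * \<mu> j) + ennreal (1 - \<gamma>) * ennreal (\<mu> j)"
      by (simp add: ens_add ens_cmult_right S3 j S4)
    also have "\<dots> = ennreal (\<gamma> * \<mu> j + (1 - \<gamma>) * \<mu> j)"
      using \<gamma>_pos \<gamma>_lt1 \<mu>nn[OF j] by (simp add: ennreal_mult'[symmetric])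
    also have "\<gamma> * \<mu> j + (1 - \<gamma>) * \<mu> j = \<mu> j" by (simp add: algebra_simps)
    finally show ?thesis .
  qed

  have WK: "(\<Sum>\<^sub>\<infinity>i\<in>I. \<Sum>\<^sub>\<infinity>a\<in>{0,1}. ennreal (zeta P E \<mu> (i, j, a))) = ennreal (\<mu> j)" if j: "j \<in> I" for j
  proof -
    have "(\<Sum>\<^sub>\<infinity>i\<in>I. \<Sum>\<^sub>\<infinity>a\<in>{0,1}. ennreal (zeta P E \<mu> (i, j, a)))
        = (\<Sum>\<^sub>\<infinity>i\<in>I. ennreal (\<mu> i * P i j) + ennreal (\<mu> i * PE P E i) * ennreal (\<mu> j))"
    proof (rule infsum_cong)
      fix i assume i: "i \<in> I"
      have "(\<Sum>\<^sub>\<infinity>a\<in>{0,1}. ennreal (zeta P E \<mu> (i, j, a))) = ennreal (zeta P E \<mu> (i, j, 0)) + ennreal (zeta P E \<mu> (i, j, 1))"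
        by (simp add: infsum_finite)
      also have "\<dots> = ennreal (\<mu> i * PE P E i * \<mu> j) + ennreal (\<mu> i * P i j)"
        by (simp add: zeta_def)
      also have "ennreal (\<mu> i * PE P E i * \<mu> j) = ennreal (\<mu> i * PE P E i) * ennreal (\<mu> j)"
        using \<mu>nn[OF j] by (simp add: ennreal_mult'')
      finally show "(\<Sum>\<^sub>\<infinity>a\<in>{0,1}. ennreal (zeta P E \<mu> (i, j, a))) = ennreal (\<mu> i * P i j) + ennreal (\<mu> i * PE P E i) * ennreal (\<mu> j)"
        by (simp add: add.commute)
    qed
    also have "\<dots> = ennreal (\<gamma> * \<mu> j) + ennreal (1 - \<gamma>) * ennreal (\<mu> j)"
      by (simp add: ens_add ens_cmult_right S3 j S4)
    also have "\<dots> = ennreal (\<gamma> * \<mu> j + (1 - \<gamma>) * \<mu> j)"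
      using \<gamma>_pos \<gamma>_lt1 \<mu>nn[OF j] by (simp add: ennreal_mult'[symmetric])
    also have "\<gamma> * \<mu> j + (1 - \<gamma>) * \<mu> j = \<mu> j" by (simp add: algebra_simps)
    finally show ?thesis .
  qed

  define H where "H = (\<Sum>\<^sub>\<infinity>k\<in>I. fe (\<mu> k))"
  define IA where "IA j = (\<Sum>\<^sub>\<infinity>k\<in>I. fe (P j k)) + (\<Sum>\<^sub>\<infinity>e\<in>E. fe (P j e)) + ennreal (PE P E j) * H" for j
  define IK where "IK j = (\<Sum>\<^sub>\<infinity>k\<in>I. fe (P j k)) + fe (PE P E j) + ennreal (PE P E j) * H" for j

  have key: "(\<Sum>\<^sub>\<infinity>e\<in>E. fe (P j e)) = fe (PE P E j) + ennreal (PE P E j) * HD P E j" if j: "j \<in> I" for j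
  proof (cases "PE P E j = 0")
    case True
    have "P j e = 0" if "e \<in> E" for e using PlePE[OF j that] Pn[OF j, of e] that True by auto
    hence "(\<Sum>\<^sub>\<infinity>e\<in>E. fe (P j e)) = (\<Sum>\<^sub>\<infinity>e\<in>E. 0)" by (intro infsum_cong) simp
    thus ?thesis using True by simp
  next
    case False
    hence pos: "PE P E j > 0" using PEnn[OF j] by auto
    define q where "q e = P j e / PE P E j" for e
    have q01: "0 \<le> q e" "q e \<le> 1" if "e \<in> E" for e
      unfolding q_def using pos PlePE[OF j that] Pn[OF j, of e] that by (auto simp: divide_le_eq_1)
    have Pq: "P j e = PE P E j * q e" for e unfolding q_def using pos by simp
    have qhs: "(q has_sum 1) E"
    proof -
      have "((\<lambda>e. P j e * (1 / PE P E j)) has_sum (PE P E j * (1 / PE P E j))) E"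
        by (rule has_sum_cmult_left[OF PEhs[OF j]])
      thus ?thesis using pos unfolding q_def by simp
    qed
    have Sq: "(\<Sum>\<^sub>\<infinity>e\<in>E. ennreal (q e)) = 1"
      using ens_real[OF qhs] q01 by simp
    have "(\<Sum>\<^sub>\<infinity>e\<in>E. fe (P j e)) = (\<Sum>\<^sub>\<infinity>e\<in>E. ennreal (q e) * fe (PE P E j) + ennreal (PE P E j) * fe (q e))"
      by (rule infsum_cong) (simp add: Pq fe_mult q01 PEnn[OF j] PEle1[OF j])
    also have "\<dots> = fe (PE P E j) + ennreal (PE P E j) * (\<Sum>\<^sub>\<infinity>e\<in>E. fe (q e))"
      by (simp add: ens_add ens_cmult_left ens_cmult_right Sq)
    also have "(\<Sum>\<^sub>\<infinity>e\<in>E. fe (q e)) = HD P E j"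
      unfolding HD_def fe_def q_def by (rule refl)
    finally show ?thesis .
  qed

  have innerA: "(\<Sum>\<^sub>\<infinity>b\<in>I \<times> I \<times> Estar E. fe (Amat P \<mu> (i, j, d) b)) = IA j" if j: "j \<in> I" for i j d
  proof -
    have "(\<Sum>\<^sub>\<infinity>b\<in>I \<times> I \<times> Estar E. fe (Amat P \<mu> (i, j, d) b))
        = (\<Sum>\<^sub>\<infinity>l\<in>I. \<Sum>\<^sub>\<infinity>y\<in>I \<times> Estar E. fe (Amat P \<mu> (i, j, d) (l, y)))"
      by (rule ens_Sigma)
    also have "\<dots> = (\<Sum>\<^sub>\<infinity>y\<in>I \<times> Estar E. fe (Amat P \<mu> (i, j, d) (j, y)))"
    proof (rule ens_single[OF j])
      fix l assume "l \<in> I" "l \<noteq> j"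
      have "fe (Amat P \<mu> (i, j, d) (l, y)) = 0" for y using \<open>l \<noteq> j\<close> by (cases y) (simp add: Amat_def)
      hence "(\<Sum>\<^sub>\<infinity>y\<in>I \<times> Estar E. fe (Amat P \<mu> (i, j, d) (l, y))) = (\<Sum>\<^sub>\<infinity>y\<in>I \<times> Estar E. 0)"
        by (intro infsum_cong) simp
      thus "(\<Sum>\<^sub>\<infinity>y\<in>I \<times> Estar E. fe (Amat P \<mu> (i, j, d) (l, y))) = 0" by simp
    qed
    also have "\<dots> = (\<Sum>\<^sub>\<infinity>k\<in>I. \<Sum>\<^sub>\<infinity>e\<in>Estar E. fe (Amat P \<mu> (i, j, d) (j, k, e)))"
      by (rule ens_Sigma)
    also have "\<dots> = (\<Sum>\<^sub>\<infinity>k\<in>I. fe (P j k) + (\<Sum>\<^sub>\<infinity>e\<in>E. fe (P j e * \<mu> k)))"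
      by (rule infsum_cong) (simp add: ens_Estar Amat_def)
    also have "\<dots> = (\<Sum>\<^sub>\<infinity>k\<in>I. fe (P j k) + ((\<Sum>\<^sub>\<infinity>e\<in>E. ennreal (\<mu> k) * fe (P j e)) + (\<Sum>\<^sub>\<infinity>e\<in>E. fe (\<mu> k) * ennreal (P j e))))"
    proof (rule infsum_cong)
      fix k assume k: "k \<in> I"
      have "(\<Sum>\<^sub>\<infinity>e\<in>E. fe (P j e * \<mu> k)) = (\<Sum>\<^sub>\<infinity>e\<in>E. ennreal (\<mu> k) * fe (P j e) + fe (\<mu> k) * ennreal (P j e))"
        by (rule infsum_cong) (simp add: fe_mult Pn Ple1 j k \<mu>nn \<mu>le1 mult.commute)
      thus "fe (P j k) + (\<Sum>\<^sub>\<infinity>e\<in>E. fe (P j e * \<mu> k)) = fe (P j k) + ((\<Sum>\<^sub>\<infinity>e\<in>E. ennreal (\<mu> k) * fe (P j e)) + (\<Sum>\<^sub>\<infinity>e\<in>E. fe (\<mu> k) * ennreal (P j e)))"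
        by (simp add: ens_add)
    qed
    also have "\<dots> = (\<Sum>\<^sub>\<infinity>k\<in>I. fe (P j k) + (ennreal (\<mu> k) * (\<Sum>\<^sub>\<infinity>e\<in>E. fe (P j e)) + fe (\<mu> k) * ennreal (PE P E j)))"
      by (simp add: ens_cmult_left S2 j)
    also have "\<dots> = (\<Sum>\<^sub>\<infinity>k\<in>I. fe (P j k)) + ((\<Sum>\<^sub>\<infinity>k\<in>I. ennreal (\<mu> k)) * (\<Sum>\<^sub>\<infinity>e\<in>E. fe (P j e)) + H * ennreal (PE P E j))"
      unfolding H_def by (simp add: ens_add ens_cmult_right)
    also have "\<dots> = IA j" unfolding IA_def S1 by (simp add: mult.commute add.assoc)
    finally show ?thesis .
  qed

  have innerK: "(\<Sum>\<^sub>\<infinity>b\<in>I \<times> I \<times> {0,1}. fe (Kmat P E \<mu> (i, j, a) b)) = IK j" if j: "j \<in> I" for i j a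
  proof -
    have "(\<Sum>\<^sub>\<infinity>b\<in>I \<times> I \<times> {0,1}. fe (Kmat P E \<mu> (i, j, a) b))
        = (\<Sum>\<^sub>\<infinity>l\<in>I. \<Sum>\<^sub>\<infinity>y\<in>I \<times> {0,1}. fe (Kmat P E \<mu> (i, j, a) (l, y)))"
      by (rule ens_Sigma)
    also have "\<dots> = (\<Sum>\<^sub>\<infinity>y\<in>I \<times> {0,1}. fe (Kmat P E \<mu> (i, j, a) (j, y)))"
    proof (rule ens_single[OF j])
      fix l assume "l \<in> I" "l \<noteq> j"
      have "fe (Kmat P E \<mu> (i, j, a) (l, y)) = 0" for y using \<open>l \<noteq> j\<close> by (cases y) (simp add: Kmat_def)
      hence "(\<Sum>\<^sub>\<infinity>y\<in>I \<times> {0,1}. fe (Kmat P E \<mu> (i, j, a) (l, y))) = (\<Sum>\<^sub>\<infinity>y\<in>I \<times> {0::nat,1}. 0)"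
        by (intro infsum_cong) simp
      thus "(\<Sum>\<^sub>\<infinity>y\<in>I \<times> {0,1}. fe (Kmat P E \<mu> (i, j, a) (l, y))) = 0" by simp
    qed
    also have "\<dots> = (\<Sum>\<^sub>\<infinity>k\<in>I. \<Sum>\<^sub>\<infinity>b\<in>{0,1}. fe (Kmat P E \<mu> (i, j, a) (j, k, b)))"
      by (rule ens_Sigma)
    also have "\<dots> = (\<Sum>\<^sub>\<infinity>k\<in>I. fe (P j k) + (ennreal (\<mu> k) * fe (PE P E j) + ennreal (PE P E j) * fe (\<mu> k)))"
    proof (rule infsum_cong)
      fix k assume k: "k \<in> I"
      have "(\<Sum>\<^sub>\<infinity>b\<in>{0,1}. fe (Kmat P E \<mu> (i, j, a) (j, k, b))) = fe (PE P E j * \<mu> k) + fe (P j k)"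
        by (simp add: infsum_finite Kmat_def)
      also have "fe (PE P E j * \<mu> k) = ennreal (\<mu> k) * fe (PE P E j) + ennreal (PE P E j) * fe (\<mu> k)"
        by (rule fe_mult) (simp_all add: PEnn PEle1 j k \<mu>nn \<mu>le1)
      finally show "(\<Sum>\<^sub>\<infinity>b\<in>{0,1}. fe (Kmat P E \<mu> (i, j, a) (j, k, b))) = fe (P j k) + (ennreal (\<mu> k) * fe (PE P E j) + ennreal (PE P E j) * fe (\<mu> k))"
        by (simp add: add.commute)
    qed
    also have "\<dots> = (\<Sum>\<^sub>\<infinity>k\<in>I. fe (P j k)) + ((\<Sum>\<^sub>\<infinity>k\<in>I. ennreal (\<mu> k)) * fe (PE P E j) + ennreal (PE P E j) * H)"
      unfolding H_def by (simp add: ens_add ens_cmult_right ens_cmult_left)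
    also have "\<dots> = IK j" unfolding IK_def S1 by (simp add: add.assoc)
    finally show ?thesis .
  qed

  have hA: "entropy_rate (I \<times> I \<times> Estar E) (Amat P \<mu>) (eta P \<mu>) = (\<Sum>\<^sub>\<infinity>j\<in>I. ennreal (\<mu> j) * IA j)"
  proof -
    have "entropy_rate (I \<times> I \<times> Estar E) (Amat P \<mu>) (eta P \<mu>)
        = (\<Sum>\<^sub>\<infinity>x\<in>I \<times> I \<times> Estar E. ennreal (eta P \<mu> x) * (\<Sum>\<^sub>\<infinity>b\<in>I \<times> I \<times> Estar E. fe (Amat P \<mu> x b)))"
      unfolding entropy_rate_def fe_def by (rule refl)
    also have "\<dots> = (\<Sum>\<^sub>\<infinity>i\<in>I. \<Sum>\<^sub>\<infinity>y\<in>I \<times> Estar E. ennreal (eta P \<mu> (i, y)) * (\<Sum>\<^sub>\<infinity>b\<in>I \<times> I \<times> Estar E. fe (Amat P \<mu> (i, y) b)))"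
      by (rule ens_Sigma)
    also have "\<dots> = (\<Sum>\<^sub>\<infinity>i\<in>I. \<Sum>\<^sub>\<infinity>j\<in>I. \<Sum>\<^sub>\<infinity>d\<in>Estar E. ennreal (eta P \<mu> (i, j, d)) * (\<Sum>\<^sub>\<infinity>b\<in>I \<times> I \<times> Estar E. fe (Amat P \<mu> (i, j, d) b)))"
      by (rule infsum_cong) (rule ens_Sigma)
    also have "\<dots> = (\<Sum>\<^sub>\<infinity>i\<in>I. \<Sum>\<^sub>\<infinity>j\<in>I. \<Sum>\<^sub>\<infinity>d\<in>Estar E. ennreal (eta P \<mu> (i, j, d)) * IA j)"
      by (intro infsum_cong) (simp add: innerA)
    also have "\<dots> = (\<Sum>\<^sub>\<infinity>i\<in>I. \<Sum>\<^sub>\<infinity>j\<in>I. (\<Sum>\<^sub>\<infinity>d\<in>Estar E. ennreal (eta P \<mu> (i, j, d))) * IA j)"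
      by (simp add: ens_cmult_right)
    also have "\<dots> = (\<Sum>\<^sub>\<infinity>j\<in>I. \<Sum>\<^sub>\<infinity>i\<in>I. (\<Sum>\<^sub>\<infinity>d\<in>Estar E. ennreal (eta P \<mu> (i, j, d))) * IA j)"
      by (rule ens_swap)
    also have "\<dots> = (\<Sum>\<^sub>\<infinity>j\<in>I. (\<Sum>\<^sub>\<infinity>i\<in>I. \<Sum>\<^sub>\<infinity>d\<in>Estar E. ennreal (eta P \<mu> (i, j, d))) * IA j)"
      by (simp add: ens_cmult_right)
    also have "\<dots> = (\<Sum>\<^sub>\<infinity>j\<in>I. ennreal (\<mu> j) * IA j)"
      by (rule infsum_cong) (simp add: WA)
    finally show ?thesis .
  qed

  have hK: "entropy_rate (I \<times> I \<times> {0,1}) (Kmat P E \<mu>) (zeta P E \<mu>) = (\<Sum>\<^sub>\<infinity>j\<in>I. ennreal (\<mu> j) * IK j)"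
  proof -
    have "entropy_rate (I \<times> I \<times> {0,1}) (Kmat P E \<mu>) (zeta P E \<mu>)
        = (\<Sum>\<^sub>\<infinity>x\<in>I \<times> I \<times> {0,1}. ennreal (zeta P E \<mu> x) * (\<Sum>\<^sub>\<infinity>b\<in>I \<times> I \<times> {0,1}. fe (Kmat P E \<mu> x b)))"
      unfolding entropy_rate_def fe_def by (rule refl)
    also have "\<dots> = (\<Sum>\<^sub>\<infinity>i\<in>I. \<Sum>\<^sub>\<infinity>y\<in>I \<times> {0,1}. ennreal (zeta P E \<mu> (i, y)) * (\<Sum>\<^sub>\<infinity>b\<in>I \<times> I \<times> {0,1}. fe (Kmat P E \<mu> (i, y) b)))"
      by (rule ens_Sigma)
    also have "\<dots> = (\<Sum>\<^sub>\<infinity>i\<in>I. \<Sum>\<^sub>\<infinity>j\<in>I. \<Sum>\<^sub>\<infinity>a\<in>{0,1}. ennreal (zeta P E \<mu> (i, j, a)) * (\<Sum>\<^sub>\<infinity>b\<in>I \<times> I \<times> {0,1}. fe (Kmat P E \<mu> (i, j, a) b)))"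
      by (rule infsum_cong) (rule ens_Sigma)
    also have "\<dots> = (\<Sum>\<^sub>\<infinity>i\<in>I. \<Sum>\<^sub>\<infinity>j\<in>I. \<Sum>\<^sub>\<infinity>a\<in>{0,1}. ennreal (zeta P E \<mu> (i, j, a)) * IK j)"
      by (intro infsum_cong) (metis innerK)
    also have "\<dots> = (\<Sum>\<^sub>\<infinity>i\<in>I. \<Sum>\<^sub>\<infinity>j\<in>I. (\<Sum>\<^sub>\<infinity>a\<in>{0,1}. ennreal (zeta P E \<mu> (i, j, a))) * IK j)"
      by (simp add: ens_cmult_right)
    also have "\<dots> = (\<Sum>\<^sub>\<infinity>j\<in>I. \<Sum>\<^sub>\<infinity>i\<in>I. (\<Sum>\<^sub>\<infinity>a\<in>{0,1}. ennreal (zeta P E \<mu> (i, j, a))) * IK j)"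
      by (rule ens_swap)
    also have "\<dots> = (\<Sum>\<^sub>\<infinity>j\<in>I. (\<Sum>\<^sub>\<infinity>i\<in>I. \<Sum>\<^sub>\<infinity>a\<in>{0,1}. ennreal (zeta P E \<mu> (i, j, a))) * IK j)"
      by (simp add: ens_cmult_right)
    also have "\<dots> = (\<Sum>\<^sub>\<infinity>j\<in>I. ennreal (\<mu> j) * IK j)"
      by (rule infsum_cong) (metis WK)
    finally show ?thesis .
  qed

  have IAK: "IA j = IK j + ennreal (PE P E j) * HD P E j" if "j \<in> I" for j
    unfolding IA_def IK_def key[OF that] by (simp add: add_ac)

  have c1: "entropy_rate (I \<times> I \<times> Estar E) (Amat P \<mu>) (eta P \<mu>)
           = entropy_rate (I \<times> I \<times> {0, 1}) (Kmat P E \<mu>) (zeta P E \<mu>)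
             + (\<Sum>\<^sub>\<infinity>i\<in>I. ennreal (\<mu> i * PE P E i) * HD P E i)"
  proof -
    have "(\<Sum>\<^sub>\<infinity>j\<in>I. ennreal (\<mu> j) * IA j) = (\<Sum>\<^sub>\<infinity>j\<in>I. ennreal (\<mu> j) * IK j + ennreal (\<mu> j * PE P E j) * HD P E j)"
      by (rule infsum_cong) (simp add: IAK distrib_left ennreal_mult' \<mu>nn mult.assoc)
    thus ?thesis unfolding hA hK by (simp add: ens_add)
  qed

  have T1: "(\<Sum>\<^sub>\<infinity>(i, j)\<in>I \<times> I. ennreal (- (\<mu> i * P i j * ln (P i j)))) = (\<Sum>\<^sub>\<infinity>i\<in>I. ennreal (\<mu> i) * (\<Sum>\<^sub>\<infinity>k\<in>I. fe (P i k)))"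
  proof -
    have "(\<Sum>\<^sub>\<infinity>(i, j)\<in>I \<times> I. ennreal (- (\<mu> i * P i j * ln (P i j)))) = (\<Sum>\<^sub>\<infinity>i\<in>I. \<Sum>\<^sub>\<infinity>j\<in>I. ennreal (- (\<mu> i * P i j * ln (P i j))))"
      by (rule ens_prod)
    also have "\<dots> = (\<Sum>\<^sub>\<infinity>i\<in>I. \<Sum>\<^sub>\<infinity>j\<in>I. ennreal (\<mu> i) * fe (P i j))"
      by (intro infsum_cong) (simp add: fe_def ennreal_mult'[symmetric] \<mu>nn mult.assoc)
    finally show ?thesis by (simp add: ens_cmult_left)
  qed
  have T2: "(\<Sum>\<^sub>\<infinity>(i, j)\<in>I \<times> E. ennreal (- (\<mu> i * P i j * ln (P i j)))) = (\<Sum>\<^sub>\<infinity>i\<in>I. ennreal (\<mu> i) * (\<Sum>\<^sub>\<infinity>k\<in>E. fe (P i k)))"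
  proof -
    have "(\<Sum>\<^sub>\<infinity>(i, j)\<in>I \<times> E. ennreal (- (\<mu> i * P i j * ln (P i j)))) = (\<Sum>\<^sub>\<infinity>i\<in>I. \<Sum>\<^sub>\<infinity>j\<in>E. ennreal (- (\<mu> i * P i j * ln (P i j))))"
      by (rule ens_prod)
    also have "\<dots> = (\<Sum>\<^sub>\<infinity>i\<in>I. \<Sum>\<^sub>\<infinity>j\<in>E. ennreal (\<mu> i) * fe (P i j))"
      by (intro infsum_cong) (simp add: fe_def ennreal_mult'[symmetric] \<mu>nn mult.assoc)
    finally show ?thesis by (simp add: ens_cmult_left)
  qed
  have T3: "(\<Sum>\<^sub>\<infinity>j\<in>I. ennreal (\<mu> j) * (ennreal (PE P E j) * H)) = ennreal (1 - \<gamma>) * H"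
  proof -
    have "(\<Sum>\<^sub>\<infinity>j\<in>I. ennreal (\<mu> j) * (ennreal (PE P E j) * H)) = (\<Sum>\<^sub>\<infinity>j\<in>I. ennreal (\<mu> j * PE P E j) * H)"
      by (rule infsum_cong) (simp add: ennreal_mult' \<mu>nn mult.assoc)
    thus ?thesis by (simp add: ens_cmult_right S4)
  qed
  have c2: "entropy_rate (I \<times> I \<times> Estar E) (Amat P \<mu>) (eta P \<mu>)
           = ennreal (1 - \<gamma>) * (\<Sum>\<^sub>\<infinity>j\<in>I. ennreal (- (\<mu> j * ln (\<mu> j))))
             + (\<Sum>\<^sub>\<infinity>(i, j)\<in>I \<times> I. ennreal (- (\<mu> i * P i j * ln (P i j))))
             + (\<Sum>\<^sub>\<infinity>(i, \<delta>)\<in>I \<times> E. ennreal (- (\<mu> i * P i \<delta> * ln (P i \<delta>))))"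
  proof -
    have "(\<Sum>\<^sub>\<infinity>j\<in>I. ennreal (\<mu> j) * IA j)
        = (\<Sum>\<^sub>\<infinity>j\<in>I. ennreal (\<mu> j) * (\<Sum>\<^sub>\<infinity>k\<in>I. fe (P j k)) + ennreal (\<mu> j) * (\<Sum>\<^sub>\<infinity>e\<in>E. fe (P j e)) + ennreal (\<mu> j) * (ennreal (PE P E j) * H))"
      unfolding IA_def by (simp add: distrib_left)
    also have "\<dots> = (\<Sum>\<^sub>\<infinity>(i, j)\<in>I \<times> I. ennreal (- (\<mu> i * P i j * ln (P i j))))
        + (\<Sum>\<^sub>\<infinity>(i, \<delta>)\<in>I \<times> E. ennreal (- (\<mu> i * P i \<delta> * ln (P i \<delta>)))) + ennreal (1 - \<gamma>) * H"
      unfolding T1 T2 T3[symmetric] by (simp add: ens_add)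
    also have "H = (\<Sum>\<^sub>\<infinity>j\<in>I. ennreal (- (\<mu> j * ln (\<mu> j))))" unfolding H_def fe_def by (rule refl)
    finally show ?thesis unfolding hA by (simp add: add_ac)
  qed
  show ?thesis using c1 c2 by blast
qed

end
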